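(* Fix integers $n,d,k\ge1$. For each layer $l\ge0$ let $\alpha^V_l,\alpha^Q_l,\alpha^K_l,\alpha^R_l$ be scalars and $W^{V,\Phi}_l,W^{Q,\Phi}_l,W^{K,\Phi}_l,W^{R,\Phi}_l\in\mathbb{R}^{2k\times2k}$. For $B\in\mathbb{R}^{n\times d}$ and $\Phi\in\mathbb{R}^{n\times 2k}$ define $B_0=B$, $\Phi_0=\Phi$ and $$B_{l+1}^\top=(1+\alpha^R_l)B_l^\top+\alpha^V_l B_l^\top\left(\alpha^Q_l\alpha^K_l B_lB_l^\top+\Phi_l (W^{Q,\Phi}_l)^\top W^{K,\Phi}_l\Phi_l^\top\right),$$ $$\Phi_{l+1}^\top=(I+W^{R,\Phi}_l)\Phi_l^\top+W^{V,\Phi}_l\Phi_l^\top\left(\alpha^Q_l\alpha^K_l B_lB_l^\top+\Phi_l (W^{Q,\Phi}_l)^\top W^{K,\Phi}_l\Phi_l^\top\right).$$ Let $\mathrm{TF}^B_l(B,\Phi):=B_l^\top$ and $\mathrm{TF}^\Phi_l(B,\Phi):=\Phi_l^\top$. Then for every permutation matrix $U\in\mathbb{R}^{d\times d}$ and every layer $l$, $$\mathrm{TF}^B_l(BU,\Phi)=U^\top\,\mathrm{TF}^B_l(B,\Phi),\qquad \mathrm{TF}^\Phi_l(BU,\Phi)=\mathrm{TF}^\Phi_l(B,\Phi).$$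
   Context: Here $B$ plays the role of a graph incidence matrix with $n$ vertices and $d$ edges, and right-multiplication by a permutation matrix $U\in\mathbb{R}^{d\times d}$ permutes the edge indices. *)

theory Defs
  imports "HOL-Analysis.Analysis"
begin

text \<open>A permutation matrix: the matrix with entry (i,j) equal to 1 iff p i = j,
  for a permutation p of the index set.\<close>
definition permutation_matrix :: "real^'d^'d \<Rightarrow> bool" where
  "permutation_matrix U \<longleftrightarrow>
     (\<exists>p. p permutes (UNIV :: 'd set) \<and> U = (\<chi> i j. if p i = j then 1 else 0))"

text \<open>The layer recursion. B :: n x d (real^'d^'n), Phi :: n x 2k (real^'m^'n).
  TF l B Phi returns the pair (B_l^T, Phi_l^T).\<close>
fun TF :: "(nat \<Rightarrow> real) \<Rightarrow> (nat \<Rightarrow> real) \<Rightarrow> (nat \<Rightarrow> real) \<Rightarrow> (nat \<Rightarrow> real) \<Rightarrow>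
           (nat \<Rightarrow> real^'m^'m) \<Rightarrow> (nat \<Rightarrow> real^'m^'m) \<Rightarrow> (nat \<Rightarrow> real^'m^'m) \<Rightarrow> (nat \<Rightarrow> real^'m^'m) \<Rightarrow>
           nat \<Rightarrow> real^'d^'n \<Rightarrow> real^'m^'n \<Rightarrow> ((real^'n^'d) \<times> (real^'n^'m))" where
  "TF aV aQ aK aR WV WQ WK WR 0 B Phi = (transpose B, transpose Phi)"
| "TF aV aQ aK aR WV WQ WK WR (Suc l) B Phi =
     (let (BT, PT) = TF aV aQ aK aR WV WQ WK WR l B Phi;
          A = (aQ l * aK l) *\<^sub>R (transpose BT ** BT)
              + transpose PT ** transpose (WQ l) ** WK l ** PT
      in ((1 + aR l) *\<^sub>R BT + aV l *\<^sub>R (BT ** A),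
          (mat 1 + WR l) ** PT + WV l ** PT ** A))"

definition TF_B where "TF_B aV aQ aK aR WV WQ WK WR l B Phi = fst (TF aV aQ aK aR WV WQ WK WR l B Phi)"
definition TF_Phi where "TF_Phi aV aQ aK aR WV WQ WK WR l B Phi = snd (TF aV aQ aK aR WV WQ WK WR l B Phi)"

end

theory Submission
  imports Defs
begin

lemma perm_orth:
  assumes "permutation_matrix (U :: real^'d^'d)"
  shows "U ** transpose U = mat 1"
proof -
  obtain p where p: "p permutes (UNIV :: 'd set)" and U: "U = (\<chi> i j. if p i = j then 1 else 0)"
    using assms unfolding permutation_matrix_def by blast
  have inj: "p i = p j \<longleftrightarrow> i = j" for i j using p by (metis permutes_inj injD)
  show ?thesis
  proof (rule vec_eq_iff[THEN iffD2], intro allI, rule vec_eq_iff[THEN iffD2], intro allI)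
    fix i j
    have "(U ** transpose U) $ i $ j = (\<Sum>k\<in>UNIV. (if p i = k then 1 else 0) * (if p j = k then (1::real) else 0))"
      by (simp add: U matrix_matrix_mult_def transpose_def)
    also have "\<dots> = (\<Sum>k\<in>UNIV. if k = p i then (if p j = k then 1 else 0) else 0)"
      by (rule sum.cong) auto
    also have "\<dots> = (if p j = p i then 1 else 0)" by simp
    also have "\<dots> = mat 1 $ i $ j" using inj[of j i] by (auto simp: mat_def)
    finally show "(U ** transpose U) $ i $ j = mat 1 $ i $ j" .
  qed
qed

lemma mm_scaleR_right: "(A :: real^'n^'m) ** (c *\<^sub>R (X :: real^'p^'n)) = c *\<^sub>R (A ** X)"
  by (simp add: vec_eq_iff matrix_matrix_mult_def sum_distrib_left mult_ac)

lemma TF_perm: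
  assumes "U ** transpose U = mat 1"
  shows "fst (TF aV aQ aK aR WV WQ WK WR l (B ** U) Phi) = transpose U ** fst (TF aV aQ aK aR WV WQ WK WR l B Phi)
       \<and> snd (TF aV aQ aK aR WV WQ WK WR l (B ** U) Phi) = snd (TF aV aQ aK aR WV WQ WK WR l B Phi)"
proof (induction l)
  case 0
  then show ?case by (simp add: matrix_transpose_mul)
next
  case (Suc l)
  obtain BT PT where e: "TF aV aQ aK aR WV WQ WK WR l B Phi = (BT, PT)" by fastforce
  obtain BT' PT' where e': "TF aV aQ aK aR WV WQ WK WR l (B ** U) Phi = (BT', PT')" by fastforce
  from Suc e e' have h: "BT' = transpose U ** BT" "PT' = PT" by auto
  have g: "transpose BT' ** BT' = transpose BT ** BT"
  proof -
    have "transpose BT' ** BT' = transpose BT ** (U ** transpose U) ** BT"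
      by (simp add: h matrix_transpose_mul transpose_transpose matrix_mul_assoc)
    also have "\<dots> = transpose BT ** BT" by (simp add: assms)
    finally show ?thesis .
  qed
  show ?case
    apply (simp only: TF.simps e e' Let_def prod.case g fst_conv snd_conv)
    apply (simp only: h)
    apply (simp add: matrix_add_ldistrib mm_scaleR_right matrix_mul_assoc)
    done
qed

theorem lemma9:
  fixes aV aQ aK aR :: "nat \<Rightarrow> real"
    and WV WQ WK WR :: "nat \<Rightarrow> real^'m^'m"
    and B :: "real^'d^'n" and Phi :: "real^'m^'n"
    and U :: "real^'d^'d" and l :: nat
  assumes "even CARD('m)"
    and "permutation_matrix U"
  shows "TF_B aV aQ aK aR WV WQ WK WR l (B ** U) Phi
           = transpose U ** TF_B aV aQ aK aR WV WQ WK WR l B Phi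
         \<and> TF_Phi aV aQ aK aR WV WQ WK WR l (B ** U) Phi
           = TF_Phi aV aQ aK aR WV WQ WK WR l B Phi"
  using TF_perm[OF perm_orth[OF assms(2)]] unfolding TF_B_def TF_Phi_def by blast

end
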